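(* Let $q\in\mathbb{C}^{\ast}$ with $|q|=1$, $q$ not a root of unity, and suppose there exist $C,L>0$ such that $|q^n-1|\ge C|n|^{-L}$ for all integers $n\neq0$. Let $A={\cal O}(\mathbb{C}^{\ast})$ be the algebra of holomorphic functions on $\mathbb{C}^{\ast}$, regarded as a $\mathbb{Z}$-module where the generator $1\in\mathbb{Z}$ sends $f(z)$ to $f(qz)$. Then the group cohomology $H^1(\mathbb{Z},A)$ is isomorphic to $\mathbb{C}$. *)

theory Defs
  imports "HOL-Complex_Analysis.Complex_Analysis"
begin

text \<open>The algebra A = O(C^*): functions holomorphic on C - {0}; the (irrelevant) value
  at 0 is normalised to 0 so that each element of A has a unique representative.\<close>
definition holCstar :: "(complex \<Rightarrow> complex) set" where
  "holCstar = {f. f holomorphic_on (- {0}) \<and> f 0 = 0}"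

definition qact :: "complex \<Rightarrow> int \<Rightarrow> (complex \<Rightarrow> complex) \<Rightarrow> (complex \<Rightarrow> complex)" where
  "qact q n f = (\<lambda>z. f (q powi n * z))"

definition Z1 :: "complex \<Rightarrow> (int \<Rightarrow> complex \<Rightarrow> complex) set" where
  "Z1 q = {c. (\<forall>n. c n \<in> holCstar) \<and>
              (\<forall>m n. c (m + n) = (\<lambda>z. c m z + qact q m (c n) z))}"

definition B1 :: "complex \<Rightarrow> (int \<Rightarrow> complex \<Rightarrow> complex) set" where
  "B1 q = {c. \<exists>a \<in> holCstar. \<forall>n. c n = (\<lambda>z. qact q n a z - a z)}"

text \<open>H^1(Z,A) = Z1/B1 is isomorphic to C (as complex vector spaces): there is a
  C-linear map on Z1, onto C, whose kernel is exactly B1 (first isomorphism theorem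
  written out, avoiding a quotient type).\<close>
definition H1_iso_C :: "complex \<Rightarrow> bool" where
  "H1_iso_C q \<longleftrightarrow> (\<exists>\<phi> :: (int \<Rightarrow> complex \<Rightarrow> complex) \<Rightarrow> complex.
     (\<forall>c\<in>Z1 q. \<forall>d\<in>Z1 q. \<phi> (\<lambda>n z. c n z + d n z) = \<phi> c + \<phi> d) \<and>
     (\<forall>c\<in>Z1 q. \<forall>k. \<phi> (\<lambda>n z. k * c n z) = k * \<phi> c) \<and>
     \<phi> ` Z1 q = UNIV \<and>
     {c \<in> Z1 q. \<phi> c = 0} = B1 q)"

end

theory Submission imports Defs "HOL-Real_Asymp.Real_Asymp" begin

lemma seg_nz:
  fixes x :: complex and r :: real
  assumes "x \<noteq> 0" "r > 0"
  shows "0 \<notin> closed_segment (r * x) x"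
proof
  assume "0 \<in> closed_segment (r * x) x"
  then obtain u where u: "0 \<le> u" "u \<le> 1" "0 = (1 - u) *\<^sub>R (r * x) + u *\<^sub>R x"
    unfolding closed_segment_def by auto
  hence "0 = complex_of_real ((1 - u) * r + u) * x" by (simp add: scaleR_conv_of_real algebra_simps)
  moreover have "(1 - u) * r + u > 0"
    using u assms by (cases "u = 1") (auto intro: add_pos_nonneg add_nonneg_pos)
  hence "complex_of_real ((1 - u) * r + u) \<noteq> 0" by (metis of_real_eq_0_iff less_irrefl)
  ultimately show False using assms by (metis mult_eq_0_iff)
qed

lemma circle_indep:
  assumes hol: "g holomorphic_on (- {0})" and r: "r > 0"
  shows "contour_integral (circlepath 0 r) g = contour_integral (circlepath 0 1) g"
proof (rule Cauchy_theorem_homotopic_loops[OF _ _ hol])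
  show "homotopic_loops (- {0}) (circlepath 0 r) (circlepath 0 1)"
  proof (rule homotopic_loops_linear)
    fix t :: real
    have "circlepath 0 r t = r * circlepath 0 1 t" by (simp add: circlepath)
    moreover have "circlepath 0 1 t \<noteq> 0" by (simp add: circlepath)
    ultimately show "closed_segment (circlepath 0 r t) (circlepath 0 1 t) \<subseteq> - {0}"
      using seg_nz[of "circlepath 0 1 t" r] r by auto
  qed auto
qed auto

definition lcoef :: "(complex \<Rightarrow> complex) \<Rightarrow> int \<Rightarrow> complex" where
  "lcoef f n = contour_integral (circlepath 0 1) (\<lambda>w. f w * w powi (-n-1)) / (2 * of_real pi * \<i>)"

lemma hol_pow:
  assumes "f holomorphic_on (- {0})"
  shows "(\<lambda>w. f w * w powi m) holomorphic_on (- {0})"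
  using assms by (intro holomorphic_intros) auto

lemma cint_circ:
  assumes "g holomorphic_on (- {0})" "r > 0"
  shows "g contour_integrable_on (circlepath 0 r)"
  by (rule contour_integrable_holomorphic_simple[OF assms(1)]) (use assms in auto)

lemma lcoef_r:
  assumes "f holomorphic_on (- {0})" "r > 0"
  shows "lcoef f n = contour_integral (circlepath 0 r) (\<lambda>w. f w * w powi (-n-1)) / (2 * of_real pi * \<i>)"
  unfolding lcoef_def using circle_indep[OF hol_pow[OF assms(1)] assms(2)] by simp

lemma sphere_bound:
  assumes "f holomorphic_on (- {0})" "r > 0"
  obtains M where "M \<ge> 0" "\<And>w. norm w = r \<Longrightarrow> norm (f w) \<le> M"
proof -
  have "continuous_on (sphere 0 r) f"
    by (rule holomorphic_on_imp_continuous_on, rule holomorphic_on_subset[OF assms(1)]) (use assms in auto)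
  hence "compact (f ` sphere 0 r)" by (intro compact_continuous_image) auto
  then obtain a where a: "\<forall>x\<in>f ` sphere 0 r. norm x \<le> a"
    using compact_imp_bounded bounded_iff by metis
  show ?thesis
  proof (rule that[of "max a 0"])
    fix w :: complex assume "norm w = r"
    hence "w \<in> sphere 0 r" by simp
    hence "norm (f w) \<le> a" using a by blast
    thus "norm (f w) \<le> max a 0" by linarith
  qed auto
qed

lemma lcoef_bound:
  assumes hol: "f holomorphic_on (- {0})" and r: "r > 0"
    and M: "\<And>w. norm w = r \<Longrightarrow> norm (f w) \<le> M"
  shows "norm (lcoef f n) \<le> M * r powi (-n)"
proof -
  define h where "h = (\<lambda>w. f w * w powi (-n-1))"
  have hi: "(h has_contour_integral contour_integral (circlepath 0 r) h) (circlepath 0 r)"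
    by (rule has_contour_integral_integral, unfold h_def, rule cint_circ[OF hol_pow[OF hol] r])
  have M0: "M \<ge> 0" using M[of "complex_of_real r"] r by (smt (verit) norm_ge_zero norm_of_real)
  have "norm (contour_integral (circlepath 0 r) h) \<le> (M * r powi (-n-1)) * (2*pi*r)"
  proof (rule has_contour_integral_bound_circlepath[OF hi])
    show "0 \<le> M * r powi (- n - 1)" using M0 r by simp
    fix x :: complex assume "norm (x - 0) = r"
    hence x: "norm x = r" by simp
    show "norm (h x) \<le> M * r powi (- n - 1)"
      unfolding h_def norm_mult norm_power_int x
      by (rule mult_right_mono[OF M[OF x]]) (use r in simp)
  qed (use r in auto)
  also have "\<dots> = 2 * pi * (M * (r powi (-n-1) * r powi 1))" by simp
  also have "r powi (-n-1) * r powi 1 = r powi (-n)"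
    using r by (metis add.commute diff_add_cancel less_irrefl power_int_add)
  finally have *: "norm (contour_integral (circlepath 0 r) h) \<le> 2 * pi * (M * r powi (-n))" .
  have "norm (lcoef f n) = norm (contour_integral (circlepath 0 r) h) / (2 * pi)"
    unfolding lcoef_r[OF hol r] h_def by (simp add: norm_divide norm_mult)
  also have "\<dots> \<le> M * r powi (-n)" using * by (simp add: field_simps)
  finally show ?thesis .
qed

lemma series_rem:
  fixes a rem :: "nat \<Rightarrow> complex"
  assumes dec: "\<And>N. I = (\<Sum>k<N. c * a k) + rem N"
    and bd: "\<And>N. norm (rem N) \<le> B * x ^ N" and x: "0 \<le> x" "x < 1" and c: "c \<noteq> 0"
  shows "a sums (I / c)"
proof -
  have "(\<lambda>N. B * x ^ N) \<longlonglongrightarrow> B * 0"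
    by (intro tendsto_mult tendsto_const LIMSEQ_power_zero) (use x in auto)
  hence lim0: "(\<lambda>N. B * x ^ N) \<longlonglongrightarrow> 0" by simp
  have ev: "eventually (\<lambda>N. norm (rem N) \<le> B * x ^ N) sequentially"
    using bd by simp
  have "rem \<longlonglongrightarrow> 0"
    by (rule Lim_null_comparison[OF ev lim0])
  hence "(\<lambda>N. (I - rem N) / c) \<longlonglongrightarrow> (I - 0) / c"
    by (intro tendsto_divide tendsto_diff tendsto_const) (use c in auto)
  moreover have "(\<lambda>N. (I - rem N) / c) = (\<lambda>N. \<Sum>k<N. a k)"
  proof
    fix N
    have "I - rem N = c * (\<Sum>k<N. a k)" using dec[of N] by (simp add: sum_distrib_left)
    thus "(I - rem N) / c = (\<Sum>k<N. a k)" using c by simp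
  qed
  ultimately show ?thesis unfolding sums_def by simp
qed

lemma geom_id1:
  fixes w z :: complex
  assumes "w \<noteq> 0" "w \<noteq> z"
  shows "1 / (w - z) = (\<Sum>k<N. z ^ k / w ^ Suc k) + (z / w) ^ N / (w - z)"
proof (induction N)
  case (Suc N)
  have "(z / w) ^ N / (w - z) = z ^ N / w ^ Suc N + (z / w) ^ Suc N / (w - z)"
    using assms by (simp add: field_simps power_divide)
  thus ?case using Suc by simp
qed simp

lemma powi_neg_suc: "(x::complex) powi (- int k - 1) = 1 / x ^ Suc k"
proof -
  have "- int k - 1 = - int (Suc k)" by simp
  hence "x powi (- int k - 1) = inverse (x powi int (Suc k))" by (simp only: power_int_minus)
  thus ?thesis by (simp only: power_int_of_nat inverse_eq_divide)
qed

lemma outer: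
  assumes hol: "f holomorphic_on (- {0})" and R: "norm z < R"
  shows "(\<lambda>k. lcoef f (int k) * z ^ k) sums
           (contour_integral (circlepath 0 R) (\<lambda>w. f w / (w - z)) / (2 * of_real pi * \<i>))"
proof -
  have R0: "R > 0" using R by (smt (verit) norm_ge_zero)
  obtain M where M0: "M \<ge> 0" and M: "\<And>w. norm w = R \<Longrightarrow> norm (f w) \<le> M"
    using sphere_bound[OF hol R0] by blast
  define \<gamma> where "\<gamma> = circlepath 0 R"
  define c where "c = 2 * of_real pi * \<i>"
  define rem where "rem N = contour_integral \<gamma> (\<lambda>w. f w * (z / w) ^ N / (w - z))" for N
  have pim: "path_image \<gamma> = sphere 0 R" using R0 by (simp add: \<gamma>_def)
  have contf: "continuous_on (sphere 0 R) f"
    by (rule holomorphic_on_imp_continuous_on, rule holomorphic_on_subset[OF hol]) (use R0 in auto)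
  have wz: "w \<noteq> 0 \<and> w - z \<noteq> 0" if "w \<in> sphere 0 R" for w
    using that R R0 by auto
  have int_k: "(\<lambda>w. f w * w powi (- int k - 1) * z ^ k) contour_integrable_on \<gamma>" for k
    unfolding \<gamma>_def by (intro contour_integrable_rmul cint_circ hol_pow hol R0)
  have int_rem: "(\<lambda>w. f w * (z / w) ^ N / (w - z)) contour_integrable_on \<gamma>" for N
    unfolding \<gamma>_def
    by (rule contour_integrable_continuous_circlepath) (use R0 wz in \<open>auto intro!: continuous_intros contf\<close>)
  have dec: "contour_integral \<gamma> (\<lambda>w. f w / (w - z)) = (\<Sum>k<N. c * (lcoef f (int k) * z ^ k)) + rem N" for N
  proof -
    have "contour_integral \<gamma> (\<lambda>w. f w / (w - z)) =
          contour_integral \<gamma> (\<lambda>w. (\<Sum>k<N. f w * w powi (- int k - 1) * z ^ k) + f w * (z / w) ^ N / (w - z))"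
    proof (rule contour_integral_eq)
      fix w assume "w \<in> path_image \<gamma>"
      hence w: "w \<noteq> 0" "w \<noteq> z" using wz pim by auto
      have "f w / (w - z) = f w * (1 / (w - z))" by simp
      also have "\<dots> = f w * ((\<Sum>k<N. z ^ k / w ^ Suc k) + (z / w) ^ N / (w - z))"
        using geom_id1[OF w] by simp
      also have "\<dots> = (\<Sum>k<N. f w * w powi (- int k - 1) * z ^ k) + f w * (z / w) ^ N / (w - z)"
        unfolding distrib_left sum_distrib_left powi_neg_suc by (simp add: ac_simps)
      finally show "f w / (w - z) = (\<Sum>k<N. f w * w powi (- int k - 1) * z ^ k) + f w * (z / w) ^ N / (w - z)" .
    qed
    also have "\<dots> = (\<Sum>k<N. contour_integral \<gamma> (\<lambda>w. f w * w powi (- int k - 1) * z ^ k)) + rem N"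
    proof -
      have i1: "(\<lambda>w. \<Sum>k<N. f w * w powi (- int k - 1) * z ^ k) contour_integrable_on \<gamma>"
        by (rule contour_integrable_sum[OF finite_lessThan]) (rule int_k)
      have i2: "contour_integral \<gamma> (\<lambda>w. \<Sum>k<N. f w * w powi (- int k - 1) * z ^ k) =
                (\<Sum>k<N. contour_integral \<gamma> (\<lambda>w. f w * w powi (- int k - 1) * z ^ k))"
        by (rule contour_integral_sum[OF finite_lessThan]) (rule int_k)
      show ?thesis unfolding rem_def contour_integral_add[OF i1 int_rem] i2 ..
    qed
    also have "(\<Sum>k<N. contour_integral \<gamma> (\<lambda>w. f w * w powi (- int k - 1) * z ^ k)) = (\<Sum>k<N. c * (lcoef f (int k) * z ^ k))"
    proof (rule sum.cong[OF refl])
      fix k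
      have "contour_integral \<gamma> (\<lambda>w. f w * w powi (- int k - 1) * z ^ k) =
            contour_integral \<gamma> (\<lambda>w. f w * w powi (- int k - 1)) * z ^ k"
        by (rule contour_integral_rmul) (unfold \<gamma>_def, intro cint_circ hol_pow hol R0)
      also have "contour_integral \<gamma> (\<lambda>w. f w * w powi (- int k - 1)) = c * lcoef f (int k)"
        unfolding lcoef_r[OF hol R0] \<gamma>_def c_def by simp
      finally show "contour_integral \<gamma> (\<lambda>w. f w * w powi (- int k - 1) * z ^ k) = c * (lcoef f (int k) * z ^ k)"
        by simp
    qed
    finally show ?thesis .
  qed
  have bd: "norm (rem N) \<le> (M / (R - norm z) * (2 * pi * R)) * (norm z / R) ^ N" for N
  proof -
    have "norm (rem N) \<le> (M * (norm z / R) ^ N / (R - norm z)) * (2 * pi * R)"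
      unfolding rem_def \<gamma>_def
    proof (rule has_contour_integral_bound_circlepath[OF has_contour_integral_integral[OF int_rem[of N, unfolded \<gamma>_def]]])
      show "0 \<le> M * (norm z / R) ^ N / (R - norm z)" using M0 R R0 by (intro divide_nonneg_nonneg mult_nonneg_nonneg) auto
      fix w :: complex assume "norm (w - 0) = R"
      hence w: "norm w = R" by simp
      have "norm (w - z) \<ge> R - norm z" using w norm_triangle_ineq2[of w z] by simp
      hence "norm (f w * (z / w) ^ N / (w - z)) \<le> M * (norm z / R) ^ N / (R - norm z)"
        unfolding norm_mult norm_divide norm_power w
        using M[OF w] M0 R R0 by (intro frac_le mult_mono) (auto simp: power_divide)
      thus "norm (f w * (z / w) ^ N / (w - z)) \<le> M * (norm z / R) ^ N / (R - norm z)" .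
    qed (use R0 in auto)
    also have "(M * (norm z / R) ^ N / (R - norm z)) * (2 * pi * R) = (M / (R - norm z) * (2 * pi * R)) * (norm z / R) ^ N"
      by (simp add: divide_inverse ac_simps)
    finally show ?thesis .
  qed
  show ?thesis unfolding c_def[symmetric] \<gamma>_def[symmetric]
    by (rule series_rem[OF dec bd]) (use R R0 in \<open>auto simp: c_def\<close>)
qed

lemma inner:
  assumes hol: "f holomorphic_on (- {0})" and r0: "r > 0" and r: "r < norm z"
  shows "(\<lambda>k. lcoef f (- int k - 1) * (1 / z) ^ Suc k) sums
           (- contour_integral (circlepath 0 r) (\<lambda>w. f w / (w - z)) / (2 * of_real pi * \<i>))"
proof -
  have z0: "z \<noteq> 0" using r r0 by auto
  obtain M where M0: "M \<ge> 0" and M: "\<And>w. norm w = r \<Longrightarrow> norm (f w) \<le> M"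
    using sphere_bound[OF hol r0] by blast
  define \<gamma> where "\<gamma> = circlepath 0 r"
  define c where "c = 2 * of_real pi * \<i>"
  define rem where "rem N = contour_integral \<gamma> (\<lambda>w. f w * (w / z) ^ N / (z - w))" for N
  have pim: "path_image \<gamma> = sphere 0 r" using r0 by (simp add: \<gamma>_def)
  have contf: "continuous_on (sphere 0 r) f"
    by (rule holomorphic_on_imp_continuous_on, rule holomorphic_on_subset[OF hol]) (use r0 in auto)
  have wz: "w \<noteq> 0 \<and> z - w \<noteq> 0 \<and> w - z \<noteq> 0" if "w \<in> sphere 0 r" for w
    using that r r0 by auto
  have int_k0: "(\<lambda>w. f w * w powi (- (- int k - 1) - 1)) contour_integrable_on \<gamma>" for k
    unfolding \<gamma>_def by (intro cint_circ hol_pow hol r0)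
  have int_k: "(\<lambda>w. f w * w ^ k * (1 / z) ^ Suc k) contour_integrable_on \<gamma>" for k
    using contour_integrable_rmul[OF int_k0[of k], of "(1 / z) ^ Suc k"] by simp
  have int_rem: "(\<lambda>w. f w * (w / z) ^ N / (z - w)) contour_integrable_on \<gamma>" for N
    unfolding \<gamma>_def
    by (rule contour_integrable_continuous_circlepath) (use r0 wz z0 in \<open>auto intro!: continuous_intros contf\<close>)
  have dec: "- contour_integral \<gamma> (\<lambda>w. f w / (w - z)) = (\<Sum>k<N. c * (lcoef f (- int k - 1) * (1 / z) ^ Suc k)) + rem N" for N
  proof -
    have "- contour_integral \<gamma> (\<lambda>w. f w / (w - z)) = contour_integral \<gamma> (\<lambda>w. - (f w / (w - z)))"
      by (simp add: contour_integral_neg)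
    also have "\<dots> =
          contour_integral \<gamma> (\<lambda>w. (\<Sum>k<N. f w * w ^ k * (1 / z) ^ Suc k) + f w * (w / z) ^ N / (z - w))"
    proof (rule contour_integral_eq)
      fix w assume "w \<in> path_image \<gamma>"
      hence w: "z \<noteq> 0" "z \<noteq> w" using wz pim z0 by auto
      have "- (f w / (w - z)) = f w * (1 / (z - w))" using w by (simp add: field_simps)
      also have "\<dots> = f w * ((\<Sum>k<N. w ^ k / z ^ Suc k) + (w / z) ^ N / (z - w))"
        using geom_id1[OF w] by simp
      also have "\<dots> = (\<Sum>k<N. f w * w ^ k * (1 / z) ^ Suc k) + f w * (w / z) ^ N / (z - w)"
        unfolding distrib_left sum_distrib_left by (simp add: ac_simps power_one_over divide_inverse power_inverse)
      finally show "- (f w / (w - z)) = (\<Sum>k<N. f w * w ^ k * (1 / z) ^ Suc k) + f w * (w / z) ^ N / (z - w)" .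
    qed
    also have "\<dots> = (\<Sum>k<N. contour_integral \<gamma> (\<lambda>w. f w * w ^ k * (1 / z) ^ Suc k)) + rem N"
    proof -
      have i1: "(\<lambda>w. \<Sum>k<N. f w * w ^ k * (1 / z) ^ Suc k) contour_integrable_on \<gamma>"
        by (rule contour_integrable_sum[OF finite_lessThan]) (rule int_k)
      have i2: "contour_integral \<gamma> (\<lambda>w. \<Sum>k<N. f w * w ^ k * (1 / z) ^ Suc k) =
                (\<Sum>k<N. contour_integral \<gamma> (\<lambda>w. f w * w ^ k * (1 / z) ^ Suc k))"
        by (rule contour_integral_sum[OF finite_lessThan]) (rule int_k)
      show ?thesis unfolding rem_def contour_integral_add[OF i1 int_rem] i2 ..
    qed
    also have "(\<Sum>k<N. contour_integral \<gamma> (\<lambda>w. f w * w ^ k * (1 / z) ^ Suc k)) = (\<Sum>k<N. c * (lcoef f (- int k - 1) * (1 / z) ^ Suc k))"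
    proof (rule sum.cong[OF refl])
      fix k
      have "contour_integral \<gamma> (\<lambda>w. f w * w powi (- (- int k - 1) - 1) * (1 / z) ^ Suc k) =
            contour_integral \<gamma> (\<lambda>w. f w * w powi (- (- int k - 1) - 1)) * (1 / z) ^ Suc k"
        by (rule contour_integral_rmul[OF int_k0])
      also have "contour_integral \<gamma> (\<lambda>w. f w * w powi (- (- int k - 1) - 1)) = c * lcoef f (- int k - 1)"
        unfolding lcoef_r[OF hol r0] \<gamma>_def c_def by simp
      finally show "contour_integral \<gamma> (\<lambda>w. f w * w ^ k * (1 / z) ^ Suc k) = c * (lcoef f (- int k - 1) * (1 / z) ^ Suc k)"
        by simp
    qed
    finally show ?thesis .
  qed
  have bd: "norm (rem N) \<le> (M / (norm z - r) * (2 * pi * r)) * (r / norm z) ^ N" for N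
  proof -
    have "norm (rem N) \<le> (M * (r / norm z) ^ N / (norm z - r)) * (2 * pi * r)"
      unfolding rem_def \<gamma>_def
    proof (rule has_contour_integral_bound_circlepath[OF has_contour_integral_integral[OF int_rem[of N, unfolded \<gamma>_def]]])
      show "0 \<le> M * (r / norm z) ^ N / (norm z - r)" using M0 r r0 by (intro divide_nonneg_nonneg mult_nonneg_nonneg) auto
      fix w :: complex assume "norm (w - 0) = r"
      hence w: "norm w = r" by simp
      have "norm (z - w) \<ge> norm z - r" using w norm_triangle_ineq2[of z w] by simp
      hence "norm (f w * (w / z) ^ N / (z - w)) \<le> M * (r / norm z) ^ N / (norm z - r)"
        unfolding norm_mult norm_divide norm_power w
        using M[OF w] M0 r r0 by (intro frac_le mult_mono) (auto simp: power_divide)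
      thus "norm (f w * (w / z) ^ N / (z - w)) \<le> M * (r / norm z) ^ N / (norm z - r)" .
    qed (use r0 in auto)
    also have "(M * (r / norm z) ^ N / (norm z - r)) * (2 * pi * r) = (M / (norm z - r) * (2 * pi * r)) * (r / norm z) ^ N"
      by (simp add: divide_inverse ac_simps)
    finally show ?thesis .
  qed
  show ?thesis unfolding c_def[symmetric] \<gamma>_def[symmetric]
    by (rule series_rem[OF dec bd]) (use r r0 in \<open>auto simp: c_def divide_less_eq\<close>)
qed

lemma circ_inv_in:
  assumes "norm z < R"
  shows "contour_integral (circlepath 0 R) (\<lambda>w. 1 / (w - z)) = 2 * of_real pi * \<i>"
proof -
  have R: "R > 0" using assms by (smt (verit) norm_ge_zero)
  have "z \<notin> path_image (circlepath 0 R)" using assms R by auto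
  from winding_number_valid_path[OF valid_path_circlepath this]
  have "winding_number (circlepath 0 R) z = 1/(2*pi*\<i>) * contour_integral (circlepath 0 R) (\<lambda>w. 1 / (w - z))" .
  moreover have "winding_number (circlepath 0 R) z = 1" using assms by (intro winding_number_circlepath) simp
  ultimately show ?thesis by (simp add: field_simps)
qed

lemma circ_inv_out:
  assumes "norm z > r" "r > 0"
  shows "contour_integral (circlepath 0 r) (\<lambda>w. 1 / (w - z)) = 0"
proof -
  have "z \<notin> path_image (circlepath 0 r)" using assms by auto
  from winding_number_valid_path[OF valid_path_circlepath this]
  have "winding_number (circlepath 0 r) z = 1/(2*pi*\<i>) * contour_integral (circlepath 0 r) (\<lambda>w. 1 / (w - z))" .
  moreover have "winding_number (circlepath 0 r) z = 0"
    by (rule winding_number_zero_outside[of _ "cball 0 r"]) (use assms in auto)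
  ultimately show ?thesis by simp
qed

lemma annulus_cauchy:
  assumes hol: "f holomorphic_on (- {0})" and r0: "r > 0" and r: "r < norm z" and R: "norm z < R"
  shows "contour_integral (circlepath 0 R) (\<lambda>w. f w / (w - z)) - contour_integral (circlepath 0 r) (\<lambda>w. f w / (w - z))
         = 2 * of_real pi * \<i> * f z"
proof -
  have R0: "R > 0" using r r0 R by linarith
  have z0: "z \<noteq> 0" using r r0 by auto
  define g where "g = (\<lambda>w. if w = z then deriv f z else (f w - f z) / (w - z))"
  have "z \<in> interior (- {0})" using z0 by (subst interior_open) auto
  from pole_lemma[OF hol this] have holg: "g holomorphic_on (- {0})" unfolding g_def .
  have eqg: "contour_integral (circlepath 0 R) g = contour_integral (circlepath 0 r) g"
    using circle_indep[OF holg R0] circle_indep[OF holg r0] by simp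
  have key: "contour_integral (circlepath 0 \<rho>) g =
      contour_integral (circlepath 0 \<rho>) (\<lambda>w. f w / (w - z)) - f z * contour_integral (circlepath 0 \<rho>) (\<lambda>w. 1 / (w - z))"
    if \<rho>: "\<rho> > 0" "\<rho> \<noteq> norm z" for \<rho>
  proof -
    have contf: "continuous_on (sphere 0 \<rho>) f"
      by (rule holomorphic_on_imp_continuous_on, rule holomorphic_on_subset[OF hol]) (use \<rho> in auto)
    have wz: "w - z \<noteq> 0" if "w \<in> sphere 0 \<rho>" for w using that \<rho> by auto
    have i1: "(\<lambda>w. f w / (w - z)) contour_integrable_on circlepath 0 \<rho>"
      by (rule contour_integrable_continuous_circlepath) (use \<rho> wz in \<open>auto intro!: continuous_intros contf\<close>)
    have i2: "(\<lambda>w. 1 / (w - z)) contour_integrable_on circlepath 0 \<rho>"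
      by (rule contour_integrable_continuous_circlepath) (use \<rho> wz in \<open>auto intro!: continuous_intros\<close>)
    have "contour_integral (circlepath 0 \<rho>) g = contour_integral (circlepath 0 \<rho>) (\<lambda>w. f w / (w - z) - f z * (1 / (w - z)))"
    proof (rule contour_integral_eq)
      fix w assume "w \<in> path_image (circlepath 0 \<rho>)"
      hence "w \<noteq> z" using \<rho> by auto
      thus "g w = f w / (w - z) - f z * (1 / (w - z))" unfolding g_def by (simp add: diff_divide_distrib)
    qed
    also have "\<dots> = contour_integral (circlepath 0 \<rho>) (\<lambda>w. f w / (w - z)) - f z * contour_integral (circlepath 0 \<rho>) (\<lambda>w. 1 / (w - z))"
      by (simp only: contour_integral_diff[OF i1 contour_integrable_lmul[OF i2]] contour_integral_lmul[OF i2])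
    finally show ?thesis .
  qed
  show ?thesis
    using eqg key[of R] key[of r] R0 r0 r R circ_inv_in[OF R] circ_inv_out[OF r r0]
    by (simp add: algebra_simps)
qed

lemma laurent:
  assumes hol: "f holomorphic_on (- {0})" and z0: "z \<noteq> 0"
  shows "f z = (\<Sum>k. lcoef f (int k) * z ^ k) + (\<Sum>k. lcoef f (- int k - 1) * (1 / z) ^ Suc k)"
    and "summable (\<lambda>k. lcoef f (int k) * z ^ k)"
    and "summable (\<lambda>k. lcoef f (- int k - 1) * (1 / z) ^ Suc k)"
proof -
  define R where "R = 2 * norm z"
  define r where "r = norm z / 2"
  have R: "norm z < R" and r0: "r > 0" and r: "r < norm z" using z0 by (auto simp: R_def r_def)
  note o = outer[OF hol R] and i = inner[OF hol r0 r]
  show "summable (\<lambda>k. lcoef f (int k) * z ^ k)" using o by (rule sums_summable)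
  show "summable (\<lambda>k. lcoef f (- int k - 1) * (1 / z) ^ Suc k)" using i by (rule sums_summable)
  have "f z = (contour_integral (circlepath 0 R) (\<lambda>w. f w / (w - z)) - contour_integral (circlepath 0 r) (\<lambda>w. f w / (w - z))) / (2 * of_real pi * \<i>)"
    unfolding annulus_cauchy[OF hol r0 r R] by simp
  also have "\<dots> = (\<Sum>k. lcoef f (int k) * z ^ k) + (\<Sum>k. lcoef f (- int k - 1) * (1 / z) ^ Suc k)"
    unfolding sums_unique[OF o, symmetric] sums_unique[OF i, symmetric] by (simp add: diff_divide_distrib)
  finally show "f z = (\<Sum>k. lcoef f (int k) * z ^ k) + (\<Sum>k. lcoef f (- int k - 1) * (1 / z) ^ Suc k)" .
qed

lemma ps_summable:
  fixes d :: "nat \<Rightarrow> complex"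
  assumes bd: "\<And>\<rho>. \<rho> > 0 \<Longrightarrow> \<exists>K. \<forall>n. norm (d n) \<le> K * real n powr L / \<rho> ^ n"
  shows "summable (\<lambda>n. d n * y ^ n)"
proof -
  define \<rho> where "\<rho> = 4 * (norm y + 1)"
  have \<rho>0: "\<rho> > 0" unfolding \<rho>_def by (smt (verit) norm_ge_zero)
  obtain K where K: "\<And>n. norm (d n) \<le> K * real n powr L / \<rho> ^ n" using bd[OF \<rho>0] by blast
  have "(\<lambda>n::nat. real n powr L * (1/2)^n) \<longlonglongrightarrow> 0" by real_asymp
  hence ev: "eventually (\<lambda>n. real n powr L * (1/2)^n < 1) sequentially"
    by (rule order_tendstoD) simp
  have sg: "summable (\<lambda>n. \<bar>K\<bar> * (1/2::real)^n)"
    by (intro summable_mult summable_geometric) simp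
  show ?thesis
  proof (rule summable_comparison_test_ev[OF _ sg])
    show "eventually (\<lambda>n. norm (d n * y ^ n) \<le> \<bar>K\<bar> * (1/2) ^ n) sequentially"
      using ev
    proof eventually_elim
      case (elim n)
      have y: "norm y / \<rho> \<le> 1/4" by (subst pos_divide_le_eq[OF \<rho>0]) (simp add: \<rho>_def)
      have "norm (d n * y ^ n) = norm (d n) * norm y ^ n" by (simp add: norm_mult norm_power)
      also have "\<dots> \<le> (K * real n powr L / \<rho> ^ n) * norm y ^ n"
        by (rule mult_right_mono[OF K]) simp
      also have "\<dots> \<le> (\<bar>K\<bar> * real n powr L / \<rho> ^ n) * norm y ^ n"
        by (intro mult_right_mono divide_right_mono mult_right_mono) (use \<rho>0 in auto)
      also have "\<dots> = \<bar>K\<bar> * real n powr L * (norm y / \<rho>) ^ n" by (simp add: power_divide)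
      also have "\<dots> \<le> \<bar>K\<bar> * real n powr L * (1/4) ^ n"
        by (intro mult_left_mono power_mono y) (use \<rho>0 in auto)
      also have "\<dots> = \<bar>K\<bar> * (real n powr L * (1/2) ^ n) * (1/2) ^ n"
        by (simp add: power_mult_distrib[symmetric])
      also have "\<dots> \<le> \<bar>K\<bar> * 1 * (1/2) ^ n"
        using elim by (intro mult_right_mono mult_left_mono) auto
      finally show ?case by simp
    qed
  qed
qed

lemma ps_holo:
  fixes d :: "nat \<Rightarrow> complex"
  assumes "\<And>y. summable (\<lambda>n. d n * y ^ n)"
  shows "(\<lambda>y. \<Sum>n. d n * y ^ n) holomorphic_on S"
  unfolding holomorphic_on_def
  using termdiffs_strong_converges_everywhere[OF assms]
  by (metis field_differentiable_at_within field_differentiable_def)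

lemma seg_rot:
  fixes x s :: complex
  assumes x: "x \<noteq> 0" and s: "s \<noteq> -1" "norm s = 1"
  shows "0 \<notin> closed_segment x (s * x)"
proof
  assume "0 \<in> closed_segment x (s * x)"
  then obtain u where u: "0 \<le> u" "u \<le> 1" "0 = (1 - u) *\<^sub>R x + u *\<^sub>R (s * x)"
    unfolding closed_segment_def by auto
  hence "0 = (complex_of_real (1 - u) + complex_of_real u * s) * x"
    by (simp add: scaleR_conv_of_real algebra_simps)
  hence h: "complex_of_real u * s + complex_of_real (1 - u) = 0" using x by (metis mult_eq_0_iff add.commute)
  hence e: "complex_of_real u * s = - complex_of_real (1 - u)" by (simp only: eq_neg_iff_add_eq_0)
  hence "norm (complex_of_real u * s) = norm (- complex_of_real (1 - u))" by simp
  also have "\<dots> = 1 - u" using u by (simp only: norm_minus_cancel norm_of_real)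
  finally have "u = 1 - u" using u s by (simp add: norm_mult)
  hence "u = 1/2" by simp
  with e have "s = -1" by simp
  with s show False by simp
qed

lemma rot_homotopic:
  fixes g :: "real \<Rightarrow> complex"
  assumes g: "path g" "pathfinish g = pathstart g" "\<And>t. g t \<noteq> 0"
    and s: "s \<noteq> -1" "norm s = 1"
  shows "homotopic_loops (- {0}) g (\<lambda>t. s * g t)"
proof (rule homotopic_loops_linear)
  show "path (\<lambda>t. s * g t)" using g by (intro path_mult path_const) auto
  show "pathfinish (\<lambda>t. s * g t) = pathstart (\<lambda>t. s * g t)" using g by (simp add: pathfinish_def pathstart_def)
  fix t :: real
  show "closed_segment (g t) (s * g t) \<subseteq> - {0}" using seg_rot[OF g(3) s] by auto
qed (use g in auto)

lemma rot_integral: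
  assumes holF: "F holomorphic_on (- {0})" and p: "norm p = 1"
  shows "contour_integral (circlepath 0 1) (\<lambda>w. F (p * w) * p) = contour_integral (circlepath 0 1) F"
proof -
  define \<gamma> where "\<gamma> = circlepath (0::complex) 1"
  define \<beta> where "\<beta> = (\<lambda>t. p * \<gamma> t)"
  define s where "s = csqrt p"
  have s1: "norm s = 1" using p by (simp add: s_def)
  have sm: "s \<noteq> -1"
  proof
    assume "s = -1" hence "Re s = -1" by simp
    moreover have "Re s \<ge> 0" unfolding s_def by (rule Re_csqrt)
    ultimately show False by simp
  qed
  have ssp: "s * s = p" unfolding s_def by (metis power2_csqrt power2_eq_square)
  have g0: "\<gamma> t \<noteq> 0" for t by (simp add: \<gamma>_def circlepath)
  have pg: "path \<gamma>" "pathfinish \<gamma> = pathstart \<gamma>" by (auto simp: \<gamma>_def)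
  have h1: "homotopic_loops (- {0}) \<gamma> (\<lambda>t. s * \<gamma> t)"
    by (rule rot_homotopic[OF pg g0 sm s1])
  have h2: "homotopic_loops (- {0}) (\<lambda>t. s * \<gamma> t) (\<lambda>t. s * (s * \<gamma> t))"
  proof (rule rot_homotopic[OF _ _ _ sm s1])
    show "path (\<lambda>t. s * \<gamma> t)" using pg by (intro path_mult path_const) auto
    show "pathfinish (\<lambda>t. s * \<gamma> t) = pathstart (\<lambda>t. s * \<gamma> t)" using pg by (simp add: pathfinish_def pathstart_def)
    show "s * \<gamma> t \<noteq> 0" for t using g0 s1 by auto
  qed
  have "(\<lambda>t. s * (s * \<gamma> t)) = \<beta>" unfolding \<beta>_def using ssp by (auto simp: mult.assoc[symmetric])
  with h1 h2 have hom: "homotopic_loops (- {0}) \<gamma> \<beta>" by (metis homotopic_loops_trans)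
  have vb: "valid_path \<beta>"
  proof -
    have "valid_path ((\<lambda>w. p * w) \<circ> \<gamma>)"
      by (rule valid_path_compose_holomorphic[where S = UNIV]) (auto simp: \<gamma>_def intro!: holomorphic_intros)
    thus ?thesis by (simp add: \<beta>_def o_def)
  qed
  have C1: "contour_integral \<gamma> F = contour_integral \<beta> F"
    by (rule Cauchy_theorem_homotopic_loops[OF hom _ holF]) (auto simp: \<gamma>_def vb)
  have iff: "(F has_contour_integral I) \<beta> \<longleftrightarrow> ((\<lambda>w. F (p * w) * p) has_contour_integral I) \<gamma>" for I
    unfolding has_contour_integral_def
  proof (rule has_integral_cong)
    fix x :: real assume x: "x \<in> {0..1}"
    obtain D where dg: "(\<gamma> has_vector_derivative D) (at x within cbox 0 1)"
      unfolding \<gamma>_def using has_vector_derivative_circlepath by blast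
    have db: "(\<beta> has_vector_derivative p * D) (at x within cbox 0 1)"
      unfolding \<beta>_def by (rule has_vector_derivative_mult_right[OF dg])
    have "vector_derivative \<gamma> (at x within {0..1}) = D"
      using vector_derivative_within_cbox[of 0 1 x \<gamma> D] dg x by simp
    moreover have "vector_derivative \<beta> (at x within {0..1}) = p * D"
      using vector_derivative_within_cbox[of 0 1 x \<beta> "p * D"] db x by simp
    ultimately show "F (\<beta> x) * vector_derivative \<beta> (at x within {0..1}) =
          F (p * \<gamma> x) * p * vector_derivative \<gamma> (at x within {0..1})"
      by (simp add: \<beta>_def)
  qed
  have C2: "contour_integral \<beta> F = contour_integral \<gamma> (\<lambda>w. F (p * w) * p)"
    unfolding contour_integral_def contour_integrable_on_def iff ..
  show ?thesis using C1 C2 by (simp add: \<gamma>_def)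
qed

lemma solve:
  fixes q :: complex and C L :: real
  assumes q0: "q \<noteq> 0"
    and dio: "\<And>k::int. k \<noteq> 0 \<Longrightarrow> q powi k \<noteq> 1 \<and> norm (1 / (q powi k - 1)) \<le> \<bar>real_of_int k\<bar> powr L / C"
    and C: "C > 0"
    and hol: "f holomorphic_on (- {0})" and f0: "lcoef f 0 = 0"
  shows "\<exists>a. a holomorphic_on (- {0}) \<and> a 0 = 0 \<and> (\<forall>z. z \<noteq> 0 \<longrightarrow> a (q * z) - a z = f z)"
proof -
  define dp where "dp n = (if n = 0 then 0 else lcoef f (int n) / (q powi int n - 1))" for n :: nat
  define dn where "dn n = (if n = 0 then 0 else lcoef f (- int n) / (q powi (- int n) - 1))" for n :: nat
  have sp: "summable (\<lambda>n. dp n * y ^ n)" for y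
  proof (rule ps_summable[of _ L])
    fix \<rho> :: real assume \<rho>: "\<rho> > 0"
    obtain M where M0: "M \<ge> 0" and M: "\<And>w. norm w = \<rho> \<Longrightarrow> norm (f w) \<le> M"
      using sphere_bound[OF hol \<rho>] by blast
    show "\<exists>K. \<forall>n. norm (dp n) \<le> K * real n powr L / \<rho> ^ n"
    proof (intro exI allI)
      fix n :: nat
      show "norm (dp n) \<le> M / C * real n powr L / \<rho> ^ n"
      proof (cases "n = 0")
        case False
        hence nz: "int n \<noteq> 0" by simp
        have "norm (dp n) = norm (lcoef f (int n)) * norm (1 / (q powi int n - 1))"
          using False by (simp add: dp_def norm_divide)
        also have "\<dots> \<le> (M * \<rho> powi (- int n)) * (real n powr L / C)"
          using dio[OF nz] lcoef_bound[OF hol \<rho> M, of "int n"] M0 \<rho>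
          by (intro mult_mono) auto
        also have "\<rho> powi (- int n) = 1 / \<rho> ^ n" by (simp add: power_int_minus inverse_eq_divide)
        finally show ?thesis by (simp add: mult.commute)
      qed (simp add: dp_def)
    qed
  qed
  have sn: "summable (\<lambda>n. dn n * y ^ n)" for y
  proof (rule ps_summable[of _ L])
    fix \<rho> :: real assume \<rho>: "\<rho> > 0"
    hence \<rho>': "1 / \<rho> > 0" by simp
    obtain M where M0: "M \<ge> 0" and M: "\<And>w. norm w = 1 / \<rho> \<Longrightarrow> norm (f w) \<le> M"
      using sphere_bound[OF hol \<rho>'] by blast
    show "\<exists>K. \<forall>n. norm (dn n) \<le> K * real n powr L / \<rho> ^ n"
    proof (intro exI allI)
      fix n :: nat
      show "norm (dn n) \<le> M / C * real n powr L / \<rho> ^ n"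
      proof (cases "n = 0")
        case False
        hence nz: "- int n \<noteq> 0" by simp
        have "norm (dn n) = norm (lcoef f (- int n)) * norm (1 / (q powi (- int n) - 1))"
          using False by (simp add: dn_def norm_divide)
        also have "\<dots> \<le> (M * (1 / \<rho>) powi (- (- int n))) * (real n powr L / C)"
          using dio[OF nz] lcoef_bound[OF hol \<rho>' M, of "- int n"] M0 \<rho>
          by (intro mult_mono) auto
        also have "(1 / \<rho>) powi (- (- int n)) = 1 / \<rho> ^ n" by (simp add: power_divide)
        finally show ?thesis by (simp add: mult.commute)
      qed (simp add: dn_def)
    qed
  qed
  define P where "P y = (\<Sum>n. dp n * y ^ n)" for y
  define N where "N y = (\<Sum>n. dn n * y ^ n)" for y
  define a where "a z = (if z = 0 then 0 else P z + N (1 / z))" for z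
  have holP: "P holomorphic_on UNIV" unfolding P_def by (rule ps_holo[OF sp])
  have holN: "N holomorphic_on UNIV" unfolding N_def by (rule ps_holo[OF sn])
  have "(N \<circ> (\<lambda>z. 1 / z)) holomorphic_on (- {0})"
    by (rule holomorphic_on_compose_gen[OF _ holN]) (auto intro!: holomorphic_intros)
  hence "(\<lambda>z. P z + N (1 / z)) holomorphic_on (- {0})"
    using holomorphic_on_subset[OF holP] by (auto simp: o_def intro!: holomorphic_intros)
  hence hola: "a holomorphic_on (- {0})"
    by (rule holomorphic_transform) (simp add: a_def)
  have eq: "a (q * z) - a z = f z" if z: "z \<noteq> 0" for z
  proof -
    have qz: "q * z \<noteq> 0" using q0 z by simp
    have e1: "P (q * z) - P z = (\<Sum>n. lcoef f (int n) * z ^ n)"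
    proof -
      have "P (q * z) - P z = (\<Sum>n. dp n * (q * z) ^ n - dp n * z ^ n)"
        unfolding P_def by (rule suminf_diff[OF sp sp])
      also have "\<dots> = (\<Sum>n. lcoef f (int n) * z ^ n)"
      proof (rule suminf_cong)
        fix n :: nat
        show "dp n * (q * z) ^ n - dp n * z ^ n = lcoef f (int n) * z ^ n"
        proof (cases "n = 0")
          case False
          hence nz: "int n \<noteq> 0" by simp
          have "q ^ n - 1 \<noteq> 0" using dio[OF nz] by simp
          hence d: "dp n * (q ^ n - 1) = lcoef f (int n)" using False by (simp add: dp_def)
          have "dp n * (q * z) ^ n - dp n * z ^ n = (dp n * (q ^ n - 1)) * z ^ n"
            by (simp add: power_mult_distrib algebra_simps)
          thus ?thesis unfolding d .
        qed (simp add: dp_def f0)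
      qed
      finally show ?thesis .
    qed
    define g where "g n = (if n = 0 then 0 else lcoef f (- int n) * (1 / z) ^ n)" for n :: nat
    have e2: "N (1 / (q * z)) - N (1 / z) = (\<Sum>n. g n)"
    proof -
      have "N (1 / (q * z)) - N (1 / z) = (\<Sum>n. dn n * (1 / (q * z)) ^ n - dn n * (1 / z) ^ n)"
        unfolding N_def by (rule suminf_diff[OF sn sn])
      also have "\<dots> = (\<Sum>n. g n)"
      proof (rule suminf_cong)
        fix n :: nat
        show "dn n * (1 / (q * z)) ^ n - dn n * (1 / z) ^ n = g n"
        proof (cases "n = 0")
          case False
          hence nz: "- int n \<noteq> 0" by simp
          have pq: "q powi (- int n) = 1 / q ^ n" by (simp add: power_int_minus inverse_eq_divide)
          have "q powi (- int n) - 1 \<noteq> 0" using dio[OF nz] by simp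
          hence d: "dn n * (q powi (- int n) - 1) = lcoef f (- int n)" using False by (simp add: dn_def)
          have "(1 / (q * z)) ^ n = q powi (- int n) * (1 / z) ^ n"
            unfolding pq by (simp add: power_mult_distrib power_divide)
          hence "dn n * (1 / (q * z)) ^ n - dn n * (1 / z) ^ n = (dn n * (q powi (- int n) - 1)) * (1 / z) ^ n"
            by (simp add: algebra_simps)
          thus ?thesis unfolding d using False by (simp add: g_def)
        qed (simp add: dn_def g_def)
      qed
      finally show ?thesis .
    qed
    have sumg: "(\<Sum>n. g n) = (\<Sum>k. lcoef f (- int k - 1) * (1 / z) ^ Suc k)"
    proof -
      have gs: "(\<lambda>k. g (Suc k)) = (\<lambda>k. lcoef f (- int k - 1) * (1 / z) ^ Suc k)"
      proof
        fix k :: nat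
        have "- int (Suc k) = - int k - 1" by simp
        thus "g (Suc k) = lcoef f (- int k - 1) * (1 / z) ^ Suc k" unfolding g_def by (simp only: nat.distinct if_False)
      qed
      have "summable (\<lambda>k. g (Suc k))" unfolding gs by (rule laurent(3)[OF hol z])
      hence "summable g" by (simp only: summable_Suc_iff)
      have "(\<Sum>n. g (Suc n)) = suminf g - g 0" by (rule suminf_split_head[OF \<open>summable g\<close>])
      moreover have "g 0 = 0" by (simp add: g_def)
      ultimately have "suminf g = (\<Sum>n. g (Suc n))" by simp
      thus ?thesis unfolding gs .
    qed
    have "a (q * z) - a z = (P (q * z) - P z) + (N (1 / (q * z)) - N (1 / z))"
      using qz z by (simp add: a_def)
    also have "\<dots> = f z" unfolding e1 e2 sumg by (rule laurent(1)[OF hol z, symmetric])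
    finally show ?thesis .
  qed
  show ?thesis using hola eq by (intro exI[of _ a]) (auto simp: a_def)
qed

lemma Z1_hol: "c \<in> Z1 q \<Longrightarrow> c n holomorphic_on (- {0}) \<and> c n 0 = 0"
  unfolding Z1_def holCstar_def by auto

lemma Z1_rec:
  assumes "c \<in> Z1 q"
  shows "c 0 = (\<lambda>z. 0)" "c (n + 1) = (\<lambda>z. c n z + qact q n (c 1) z)"
proof -
  have co: "\<And>m n. c (m + n) = (\<lambda>z. c m z + qact q m (c n) z)" using assms unfolding Z1_def by auto
  show "c (n + 1) = (\<lambda>z. c n z + qact q n (c 1) z)" by (rule co)
  show "c 0 = (\<lambda>z. 0)"
  proof
    fix z
    have "c (0 + 0) z = c 0 z + qact q 0 (c 0) z" using co[of 0 0] by (rule fun_cong)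
    hence "c 0 z = c 0 z + c 0 z" by (simp add: qact_def)
    thus "c 0 z = 0" by simp
  qed
qed

lemma Z1_unique:
  assumes c: "c \<in> Z1 q" and d: "d \<in> Z1 q" and e: "c 1 = d 1"
  shows "c = d"
proof
  fix n :: int
  show "c n = d n"
  proof (induction n rule: int_induct[where k = 0])
    case base
    then show ?case using Z1_rec(1)[OF c] Z1_rec(1)[OF d] by simp
  next
    case (step1 i)
    then show ?case using Z1_rec(2)[OF c, of i] Z1_rec(2)[OF d, of i] e by simp
  next
    case (step2 i)
    have "c i = (\<lambda>z. c (i - 1) z + qact q (i - 1) (c 1) z)" using Z1_rec(2)[OF c, of "i - 1"] by simp
    moreover have "d i = (\<lambda>z. d (i - 1) z + qact q (i - 1) (d 1) z)" using Z1_rec(2)[OF d, of "i - 1"] by simp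
    ultimately have "(\<lambda>z. c (i - 1) z + qact q (i - 1) (c 1) z) = (\<lambda>z. d (i - 1) z + qact q (i - 1) (c 1) z)"
      using step2 e by simp
    thus ?case by (metis (no_types, lifting) add_right_cancel ext)
  qed
qed

lemma cob_Z1:
  assumes q0: "q \<noteq> 0" and a: "a \<in> holCstar"
  shows "(\<lambda>n z. qact q n a z - a z) \<in> Z1 q"
proof -
  have hola: "a holomorphic_on (- {0})" and a0: "a 0 = 0" using a by (auto simp: holCstar_def)
  have "(\<lambda>z. qact q n a z - a z) \<in> holCstar" for n
  proof -
    have "(a \<circ> (\<lambda>z. q powi n * z)) holomorphic_on (- {0})"
      by (rule holomorphic_on_compose_gen[OF _ hola]) (use q0 in \<open>auto intro!: holomorphic_intros\<close>)
    hence "(\<lambda>z. a (q powi n * z) - a z) holomorphic_on (- {0})"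
      using hola by (auto simp: o_def intro!: holomorphic_intros)
    thus ?thesis unfolding holCstar_def qact_def using a0 by simp
  qed
  moreover have "(\<lambda>z. qact q (m + n) a z - a z) = (\<lambda>z. (qact q m a z - a z) + qact q m (\<lambda>z. qact q n a z - a z) z)" for m n
  proof
    fix z
    have "q powi (m + n) = q powi m * q powi n" using q0 by (simp add: power_int_add)
    thus "qact q (m + n) a z - a z = (qact q m a z - a z) + qact q m (\<lambda>z. qact q n a z - a z) z"
      unfolding qact_def by (simp add: mult_ac)
  qed
  ultimately show ?thesis unfolding Z1_def by auto
qed

lemma lcoef_add:
  assumes "f holomorphic_on (- {0})" "g holomorphic_on (- {0})"
  shows "lcoef (\<lambda>z. f z + g z) n = lcoef f n + lcoef g n"
proof -
  have "contour_integral (circlepath 0 1) (\<lambda>w. (f w + g w) * w powi (- n - 1)) =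
        contour_integral (circlepath 0 1) (\<lambda>w. f w * w powi (- n - 1) + g w * w powi (- n - 1))"
    by (simp add: distrib_right)
  also have "\<dots> = contour_integral (circlepath 0 1) (\<lambda>w. f w * w powi (- n - 1)) + contour_integral (circlepath 0 1) (\<lambda>w. g w * w powi (- n - 1))"
    by (rule contour_integral_add) (intro cint_circ hol_pow assms; simp)+
  finally show ?thesis unfolding lcoef_def by (simp add: add_divide_distrib)
qed

lemma lcoef_cmult:
  assumes "f holomorphic_on (- {0})"
  shows "lcoef (\<lambda>z. k * f z) n = k * lcoef f n"
proof -
  have "contour_integral (circlepath 0 1) (\<lambda>w. (k * f w) * w powi (- n - 1)) =
        contour_integral (circlepath 0 1) (\<lambda>w. k * (f w * w powi (- n - 1)))"
    by (simp add: mult.assoc)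
  also have "\<dots> = k * contour_integral (circlepath 0 1) (\<lambda>w. f w * w powi (- n - 1))"
    by (rule contour_integral_lmul) (intro cint_circ hol_pow assms; simp)
  finally show ?thesis unfolding lcoef_def by simp
qed

lemma lcoef_rot:
  assumes hola: "a holomorphic_on (- {0})" and q: "norm q = 1"
  shows "lcoef (\<lambda>z. a (q * z) - a z) 0 = 0"
proof -
  have q0: "q \<noteq> 0" using q by auto
  define F where "F w = a w * w powi (-1)" for w
  have holF: "F holomorphic_on (- {0})" unfolding F_def by (rule hol_pow[OF hola])
  have holFq: "(\<lambda>w. F (q * w) * q) holomorphic_on (- {0})"
  proof -
    have "(F \<circ> (\<lambda>w. q * w)) holomorphic_on (- {0})"
      by (rule holomorphic_on_compose_gen[OF _ holF]) (use q0 in \<open>auto intro!: holomorphic_intros\<close>)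
    thus ?thesis by (auto simp: o_def intro!: holomorphic_intros)
  qed
  have "contour_integral (circlepath 0 1) (\<lambda>w. (a (q * w) - a w) * w powi (- 0 - 1)) =
        contour_integral (circlepath 0 1) (\<lambda>w. F (q * w) * q - F w)"
  proof (rule contour_integral_eq)
    fix w :: complex
    have h: "(q * w) powi (-1) * q = w powi (-1)" using q0
      by (cases "w = 0") (simp_all add: power_int_minus field_simps)
    have m: "- 0 - 1 = (-1::int)" by simp
    have "(a (q * w) - a w) * w powi (- 0 - 1) = a (q * w) * w powi (-1) - a w * w powi (-1)"
      unfolding m by (rule left_diff_distrib)
    also have "\<dots> = a (q * w) * ((q * w) powi (-1) * q) - a w * w powi (-1)" unfolding h ..
    also have "\<dots> = F (q * w) * q - F w" unfolding F_def by (simp only: mult.assoc)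
    finally show "(a (q * w) - a w) * w powi (- 0 - 1) = F (q * w) * q - F w" .
  qed
  also have "\<dots> = contour_integral (circlepath 0 1) (\<lambda>w. F (q * w) * q) - contour_integral (circlepath 0 1) F"
    by (rule contour_integral_diff) (intro cint_circ holF holFq; simp)+
  also have "\<dots> = 0" using rot_integral[OF holF q] by simp
  finally show ?thesis unfolding lcoef_def by simp
qed

theorem lemma3:
  fixes q :: complex
  assumes "q \<noteq> 0" and "norm q = 1"
    and "\<forall>n::nat. n > 0 \<longrightarrow> q ^ n \<noteq> 1"
    and "\<exists>C L :: real. C > 0 \<and> L > 0 \<and>
           (\<forall>n::int. n \<noteq> 0 \<longrightarrow> norm (q powi n - 1) \<ge> C * \<bar>real_of_int n\<bar> powr (- L))"
  shows "H1_iso_C q"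
proof -
  have q0: "q \<noteq> 0" and nq: "norm q = 1" using assms(1,2) .
  obtain C L :: real where C: "C > 0" and L: "L > 0"
    and dioh: "\<And>n::int. n \<noteq> 0 \<Longrightarrow> norm (q powi n - 1) \<ge> C * \<bar>real_of_int n\<bar> powr (- L)"
    using assms(4) by blast
  have dio: "q powi k \<noteq> 1 \<and> norm (1 / (q powi k - 1)) \<le> \<bar>real_of_int k\<bar> powr L / C" if k: "k \<noteq> 0" for k :: int
  proof -
    define x where "x = \<bar>real_of_int k\<bar>"
    have x: "x > 0" using k by (simp add: x_def)
    have pos: "C * x powr (- L) > 0" using C x by simp
    have ge: "norm (q powi k - 1) \<ge> C * x powr (- L)" using dioh[OF k] by (simp add: x_def)
    hence npos: "norm (q powi k - 1) > 0" using pos by linarith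
    hence ne: "q powi k \<noteq> 1" by auto
    have "norm (1 / (q powi k - 1)) = 1 / norm (q powi k - 1)" by (simp add: norm_divide)
    also have "\<dots> \<le> 1 / (C * x powr (- L))"
      by (rule divide_left_mono[OF ge]) (use pos npos in \<open>auto intro: mult_pos_pos\<close>)
    also have "\<dots> = x powr L / C" using C x by (simp add: powr_minus field_simps)
    finally show ?thesis using ne by (simp add: x_def)
  qed
  define \<phi> where "\<phi> c = lcoef (c 1) 0" for c :: "int \<Rightarrow> complex \<Rightarrow> complex"
  have surj: "k \<in> \<phi> ` Z1 q" for k
  proof -
    define c where "c n = (\<lambda>z::complex. if z = 0 then 0 else k * of_int n)" for n :: int
    have "c n \<in> holCstar" for n
    proof -
      have "(\<lambda>z::complex. k * of_int n) holomorphic_on (- {0})" by (intro holomorphic_intros)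
      hence "c n holomorphic_on (- {0})" by (rule holomorphic_transform) (simp add: c_def)
      thus ?thesis by (simp add: holCstar_def c_def)
    qed
    moreover have "c (m + n) = (\<lambda>z. c m z + qact q m (c n) z)" for m n
    proof
      fix z :: complex
      have "q powi m \<noteq> 0" using q0 by simp
      thus "c (m + n) z = c m z + qact q m (c n) z"
        using q0 by (cases "z = 0") (simp_all add: c_def qact_def algebra_simps)
    qed
    ultimately have cZ: "c \<in> Z1 q" unfolding Z1_def by auto
    have "\<phi> c = contour_integral (circlepath 0 1) (\<lambda>w. c 1 w * w powi (- 0 - 1)) / (2 * of_real pi * \<i>)"
      by (simp add: \<phi>_def lcoef_def)
    also have "contour_integral (circlepath 0 1) (\<lambda>w. c 1 w * w powi (- 0 - 1)) =
               contour_integral (circlepath 0 1) (\<lambda>w. k * (1 / (w - 0)))"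
    proof (rule contour_integral_eq)
      fix w assume "w \<in> path_image (circlepath 0 1)"
      hence "w \<noteq> 0" by auto
      thus "c 1 w * w powi (- 0 - 1) = k * (1 / (w - 0))" by (simp add: c_def power_int_minus divide_inverse)
    qed
    also have "\<dots> = k * contour_integral (circlepath 0 1) (\<lambda>w. 1 / (w - 0))"
      by (rule contour_integral_lmul) (rule cint_circ, auto intro!: holomorphic_intros)
    also have "\<dots> = k * (2 * of_real pi * \<i>)" using circ_inv_in[of 0 1] by simp
    finally have "\<phi> c = k" by simp
    thus ?thesis using cZ by blast
  qed
  show ?thesis unfolding H1_iso_C_def
  proof (intro exI[of _ \<phi>] conjI ballI allI)
    fix c d assume c: "c \<in> Z1 q" and d: "d \<in> Z1 q"
    show "\<phi> (\<lambda>n z. c n z + d n z) = \<phi> c + \<phi> d"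
      unfolding \<phi>_def using lcoef_add[OF conjunct1[OF Z1_hol[OF c]] conjunct1[OF Z1_hol[OF d]]] by simp
  next
    fix c k assume c: "c \<in> Z1 q"
    show "\<phi> (\<lambda>n z. k * c n z) = k * \<phi> c"
      unfolding \<phi>_def using lcoef_cmult[OF conjunct1[OF Z1_hol[OF c]]] by simp
  next
    show "\<phi> ` Z1 q = UNIV" using surj by blast
  next
    show "{c \<in> Z1 q. \<phi> c = 0} = B1 q"
    proof (rule set_eqI, rule iffI)
      fix c assume "c \<in> {c \<in> Z1 q. \<phi> c = 0}"
      hence c: "c \<in> Z1 q" and p0: "lcoef (c 1) 0 = 0" by (auto simp: \<phi>_def)
      have holf: "c 1 holomorphic_on (- {0})" and f0: "c 1 0 = 0" using Z1_hol[OF c] by auto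
      obtain a where hola: "a holomorphic_on (- {0})" and a0: "a 0 = 0"
        and eq: "\<And>z. z \<noteq> 0 \<Longrightarrow> a (q * z) - a z = c 1 z"
        using solve[OF q0 dio C holf p0] by blast
      have aH: "a \<in> holCstar" using hola a0 by (simp add: holCstar_def)
      have bZ: "(\<lambda>n z. qact q n a z - a z) \<in> Z1 q" by (rule cob_Z1[OF q0 aH])
      have "(\<lambda>z. qact q 1 a z - a z) = c 1"
      proof
        fix z show "qact q 1 a z - a z = c 1 z"
          by (cases "z = 0") (simp_all add: qact_def a0 f0 eq)
      qed
      hence "c = (\<lambda>n z. qact q n a z - a z)" using Z1_unique[OF c bZ] by simp
      thus "c \<in> B1 q" unfolding B1_def using aH by blast
    next
      fix c assume "c \<in> B1 q"
      then obtain a where aH: "a \<in> holCstar" and ca: "\<And>n. c n = (\<lambda>z. qact q n a z - a z)"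
        unfolding B1_def by blast
      have ceq: "c = (\<lambda>n z. qact q n a z - a z)" using ca by (intro ext) simp
      have "c \<in> Z1 q" unfolding ceq by (rule cob_Z1[OF q0 aH])
      moreover have "\<phi> c = 0"
      proof -
        have hola: "a holomorphic_on (- {0})" using aH by (simp add: holCstar_def)
        have "\<phi> c = lcoef (\<lambda>z. a (q * z) - a z) 0" by (simp add: \<phi>_def ca qact_def)
        also have "\<dots> = 0" by (rule lcoef_rot[OF hola nq])
        finally show ?thesis .
      qed
      ultimately show "c \<in> {c \<in> Z1 q. \<phi> c = 0}" by simp
    qed
  qed
qed

end
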